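(* There exist a constant $c>0$ and a family of graphs $\mathcal G$ (containing an $n$-vertex graph for infinitely many $n$) such that for every $n$-vertex graph $G\in\mathcal G$ and every $\rho\ge c/\log n$, every $\rho$-dense aggregator of $G$ has size $\Omega^*\big(n^{\frac{3\log n}{8\log\log n}}\big)$.
   Context: For a graph with $n'\ge 2$ vertices and $m'$ edges its density is $m'/\binom{n'}{2}$; a one-vertex graph has density $1$. A $\rho$-dense aggregator of a graph $G$ is a collection of nonempty vertex sets $S_1,\dots,S_k$ such that every clique of $G$ is contained in some $S_i$ and each induced subgraph $G[S_i]$ has density at least $\rho$; its size is $k$. The notation $\Omega^*(\cdot)$ hides multiplicative factors that are sublinear in $n$. Logarithms are base 2. *)

theory Defs
  imports "HOL-Analysis.Analysis"
begin

type_synonym graph = "nat set \<times> nat set set"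

definition simple_graph :: "graph \<Rightarrow> bool" where
  "simple_graph G \<longleftrightarrow> finite (fst G) \<and> (\<forall>e\<in>snd G. e \<subseteq> fst G \<and> card e = 2)"

definition is_clique :: "graph \<Rightarrow> nat set \<Rightarrow> bool" where
  "is_clique G K \<longleftrightarrow> K \<subseteq> fst G \<and> (\<forall>u\<in>K. \<forall>v\<in>K. u \<noteq> v \<longrightarrow> {u, v} \<in> snd G)"

definition induced_edges :: "graph \<Rightarrow> nat set \<Rightarrow> nat" where
  "induced_edges G S = card {e \<in> snd G. e \<subseteq> S}"

definition density :: "graph \<Rightarrow> nat set \<Rightarrow> real" where
  "density G S = (if card S \<ge> 2 then real (induced_edges G S) / real (card S choose 2) else 1)"

text \<open>A rho-dense aggregator S_1,...,S_k, represented as a list (size = length).\<close>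
definition dense_aggregator :: "real \<Rightarrow> graph \<Rightarrow> nat set list \<Rightarrow> bool" where
  "dense_aggregator \<rho> G Ss \<longleftrightarrow>
     (\<forall>S\<in>set Ss. S \<noteq> {} \<and> S \<subseteq> fst G \<and> density G S \<ge> \<rho>) \<and>
     (\<forall>K. is_clique G K \<longrightarrow> (\<exists>S\<in>set Ss. K \<subseteq> S))"

end

theory Submission
  imports Defs
begin


definition prs :: "nat set \<Rightarrow> nat set set" where "prs A = {e. e \<subseteq> A \<and> card e = 2}"
definition Omg :: "nat \<Rightarrow> nat \<Rightarrow> (nat set \<Rightarrow> nat) set" where
  "Omg n b = PiE (prs {0..<n}) (\<lambda>_. {..<b})"
definition gr :: "nat \<Rightarrow> (nat set \<Rightarrow> nat) \<Rightarrow> graph" where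
  "gr n f = ({0..<n}, {e \<in> prs {0..<n}. f e = 0})"
definition kcl :: "nat \<Rightarrow> nat \<Rightarrow> (nat set \<Rightarrow> nat) \<Rightarrow> nat set set" where
  "kcl n k f = {K. K \<subseteq> {0..<n} \<and> card K = k \<and> (\<forall>e\<in>prs K. f e = 0)}"

lemma finite_prs: "finite A \<Longrightarrow> finite (prs A)"
  unfolding prs_def by (rule finite_subset[of _ "Pow A"]) auto

lemma card_prs: "finite A \<Longrightarrow> card (prs A) = card A choose 2"
  unfolding prs_def by (rule n_subsets)

lemma prs_mono: "A \<subseteq> B \<Longrightarrow> prs A \<subseteq> prs B"
  unfolding prs_def by auto

lemma finite_Omg: "finite (Omg n b)"
  unfolding Omg_def by (intro finite_PiE finite_prs) auto

lemma card_Omg: "card (Omg n b) = b ^ card (prs {0..<n})"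
  unfolding Omg_def by (simp add: card_PiE finite_prs)

lemma count_zero:
  assumes T: "T \<subseteq> prs {0..<n}" and b: "b \<ge> 1"
  shows "card {f \<in> Omg n b. \<forall>e\<in>T. f e = 0} = b ^ (card (prs {0..<n}) - card T)"
proof -
  let ?P = "prs {0..<n}"
  have fP: "finite ?P" by (simp add: finite_prs)
  have eq: "{f \<in> Omg n b. \<forall>e\<in>T. f e = 0} = PiE ?P (\<lambda>e. if e \<in> T then {0} else {..<b})"
    using T b unfolding Omg_def by (auto simp: PiE_iff extensional_def split: if_splits)
  have "card (PiE ?P (\<lambda>e. if e \<in> T then {0} else {..<b})) = (\<Prod>e\<in>?P. if e \<in> T then 1 else b)"
    using fP by (simp add: card_PiE if_distrib cong: if_cong)
  also have "\<dots> = (\<Prod>e\<in>?P - T. b)"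
    using fP by (simp add: prod.If_cases Diff_eq)
  also have "\<dots> = b ^ (card ?P - card T)"
    using fP T by (simp add: card_Diff_subset finite_subset)
  finally show ?thesis using eq by simp
qed

lemma sum_kcl:
  assumes b: "b \<ge> 1"
  shows "(\<Sum>f\<in>Omg n b. card (kcl n k f)) =
         (n choose k) * b ^ (card (prs {0..<n}) - (k choose 2))"
proof -
  let ?Ks = "{K. K \<subseteq> {0..<n} \<and> card K = k}"
  have fK: "finite ?Ks" by (rule finite_subset[of _ "Pow {0..<n}"]) auto
  have "(\<Sum>f\<in>Omg n b. card (kcl n k f)) =
        (\<Sum>f\<in>Omg n b. \<Sum>K\<in>?Ks. if (\<forall>e\<in>prs K. f e = 0) then 1 else 0)"
  proof (rule sum.cong[OF refl])
    fix f
    have e: "kcl n k f = {K \<in> ?Ks. \<forall>e\<in>prs K. f e = 0}" unfolding kcl_def by auto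
    show "card (kcl n k f) = (\<Sum>K\<in>?Ks. if (\<forall>e\<in>prs K. f e = 0) then 1 else 0)"
      unfolding e by (subst card_eq_sum) (rule sum.inter_filter[OF fK])
  qed
  also have "\<dots> = (\<Sum>K\<in>?Ks. \<Sum>f\<in>Omg n b. if (\<forall>e\<in>prs K. f e = 0) then 1 else 0)"
    by (rule sum.swap)
  also have "\<dots> = (\<Sum>K\<in>?Ks. b ^ (card (prs {0..<n}) - (k choose 2)))"
  proof (rule sum.cong[OF refl])
    fix K assume K: "K \<in> ?Ks"
    have fin: "finite K" using K finite_subset by blast
    have "(\<Sum>f\<in>Omg n b. if (\<forall>e\<in>prs K. f e = 0) then 1 else 0) =
          card {f \<in> Omg n b. \<forall>e\<in>prs K. f e = 0}"
      by (subst card_eq_sum) (rule sum.inter_filter[OF finite_Omg, symmetric])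
    also have "\<dots> = b ^ (card (prs {0..<n}) - card (prs K))"
      using K b by (intro count_zero prs_mono) auto
    also have "card (prs K) = k choose 2" using K fin card_prs by auto
    finally show "(\<Sum>f\<in>Omg n b. if (\<forall>e\<in>prs K. f e = 0) then 1 else 0) =
          b ^ (card (prs {0..<n}) - (k choose 2))" .
  qed
  also have "\<dots> = (n choose k) * b ^ (card (prs {0..<n}) - (k choose 2))"
    using n_subsets[of "{0..<n}" k] by simp
  finally show ?thesis .
qed

definition Bd :: "nat \<Rightarrow> nat \<Rightarrow> nat \<Rightarrow> real \<Rightarrow> (nat set \<Rightarrow> nat) set" where
  "Bd n b m \<rho> = {f \<in> Omg n b. \<exists>S. S \<subseteq> {0..<n} \<and> m \<le> card S \<and>
      \<rho> * real (card S choose 2) \<le> real (card {e \<in> prs {0..<n}. f e = 0 \<and> e \<subseteq> S})}"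

lemma card_Bd:
  assumes b: "b \<ge> 1"
  shows "card (Bd n b m \<rho>) \<le> (\<Sum>s\<in>{m..n}. (n choose s) * ((s choose 2) choose nat \<lceil>\<rho> * real (s choose 2)\<rceil>)
          * b ^ (card (prs {0..<n}) - nat \<lceil>\<rho> * real (s choose 2)\<rceil>))"
proof -
  define r where "r s = nat \<lceil>\<rho> * real (s choose 2)\<rceil>" for s :: nat
  let ?P = "prs {0..<n}"
  let ?Z = "\<lambda>T. {f \<in> Omg n b. \<forall>e\<in>T. f e = 0}"
  let ?Ss = "\<lambda>s. {S. S \<subseteq> {0..<n} \<and> card S = s}"
  let ?Ts = "\<lambda>S. {T. T \<subseteq> prs S \<and> card T = r (card S)}"
  have fSs: "finite (?Ss s)" for s by (rule finite_subset[of _ "Pow {0..<n}"]) auto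
  have fTs: "finite (?Ts S)" if "S \<subseteq> {0..<n}" for S
  proof -
    have "finite S" using that finite_subset by blast
    then have "finite (Pow (prs S))" by (simp add: finite_prs)
    then show ?thesis by (rule finite_subset[rotated]) auto
  qed
  have sub: "Bd n b m \<rho> \<subseteq> (\<Union>s\<in>{m..n}. \<Union>S\<in>?Ss s. \<Union>T\<in>?Ts S. ?Z T)"
  proof
    fix f assume "f \<in> Bd n b m \<rho>"
    then obtain S where f: "f \<in> Omg n b" and S: "S \<subseteq> {0..<n}" "m \<le> card S"
      and d: "\<rho> * real (card S choose 2) \<le> real (card {e \<in> ?P. f e = 0 \<and> e \<subseteq> S})"
      unfolding Bd_def by blast
    let ?E = "{e \<in> ?P. f e = 0 \<and> e \<subseteq> S}"
    have fE: "finite ?E" by (rule finite_subset[of _ ?P]) (auto simp: finite_prs)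
    have le: "r (card S) \<le> card ?E" unfolding r_def using d by simp
    obtain T where T: "T \<subseteq> ?E" "card T = r (card S)" "finite T"
      by (rule obtain_subset_with_card_n[OF le])
    have "T \<subseteq> prs S" using T unfolding prs_def by auto
    moreover have "card S \<le> n" using S card_mono[of "{0..<n}" S] by simp
    moreover have "f \<in> ?Z T" using T f by auto
    ultimately have i1: "card S \<in> {m..n}" "S \<in> ?Ss (card S)" "T \<in> ?Ts S" "f \<in> ?Z T"
      using S T by auto
    show "f \<in> (\<Union>s\<in>{m..n}. \<Union>S\<in>?Ss s. \<Union>T\<in>?Ts S. ?Z T)"
    proof -
      have "f \<in> (\<Union>T\<in>?Ts S. ?Z T)" using i1(3,4) by blast
      then have "f \<in> (\<Union>S'\<in>?Ss (card S). \<Union>T\<in>?Ts S'. ?Z T)" using i1(2) by blast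
      then show ?thesis using i1(1) by blast
    qed
  qed
  have "card (Bd n b m \<rho>) \<le> card (\<Union>s\<in>{m..n}. \<Union>S\<in>?Ss s. \<Union>T\<in>?Ts S. ?Z T)"
    by (rule card_mono[OF finite_subset[OF _ finite_Omg[of n b]] sub]) (intro UN_least; auto)
  also have "\<dots> \<le> (\<Sum>s\<in>{m..n}. card (\<Union>S\<in>?Ss s. \<Union>T\<in>?Ts S. ?Z T))"
    by (rule card_UN_le) simp
  also have "\<dots> \<le> (\<Sum>s\<in>{m..n}. (n choose s) * ((s choose 2) choose r s) * b ^ (card ?P - r s))"
  proof (rule sum_mono)
    fix s assume "s \<in> {m..n}"
    have "card (\<Union>S\<in>?Ss s. \<Union>T\<in>?Ts S. ?Z T) \<le> (\<Sum>S\<in>?Ss s. card (\<Union>T\<in>?Ts S. ?Z T))"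
      by (rule card_UN_le) (rule fSs)
    also have "\<dots> \<le> (\<Sum>S\<in>?Ss s. ((s choose 2) choose r s) * b ^ (card ?P - r s))"
    proof (rule sum_mono)
      fix S assume S: "S \<in> ?Ss s"
      have fS: "finite S" using S finite_subset by blast
      have "card (\<Union>T\<in>?Ts S. ?Z T) \<le> (\<Sum>T\<in>?Ts S. card (?Z T))"
        by (rule card_UN_le) (use S fTs in auto)
      also have "\<dots> = (\<Sum>T\<in>?Ts S. b ^ (card ?P - r s))"
      proof (rule sum.cong[OF refl])
        fix T assume T: "T \<in> ?Ts S"
        have "T \<subseteq> ?P" using T S prs_mono[of S "{0..<n}"] by auto
        then show "card (?Z T) = b ^ (card ?P - r s)" using count_zero[OF _ b] T S by auto
      qed
      also have "\<dots> = card (?Ts S) * b ^ (card ?P - r s)" by simp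
      also have "card (?Ts S) = (s choose 2) choose r s"
        using n_subsets[of "prs S" "r s"] S fS card_prs finite_prs by auto
      finally show "card (\<Union>T\<in>?Ts S. ?Z T) \<le> ((s choose 2) choose r s) * b ^ (card ?P - r s)" .
    qed
    also have "\<dots> = (n choose s) * ((s choose 2) choose r s) * b ^ (card ?P - r s)"
      using n_subsets[of "{0..<n}" s] by simp
    finally show "card (\<Union>S\<in>?Ss s. \<Union>T\<in>?Ts S. ?Z T) \<le> (n choose s) * ((s choose 2) choose r s) * b ^ (card ?P - r s)" .
  qed
  finally show ?thesis unfolding r_def .
qed


lemma kcl_le: "card (kcl n k f) \<le> n choose k"
proof -
  have "kcl n k f \<subseteq> {K. K \<subseteq> {0..<n} \<and> card K = k}" unfolding kcl_def by auto
  then have "card (kcl n k f) \<le> card {K. K \<subseteq> {0..<n} \<and> card K = k}"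
    by (rule card_mono[rotated]) (rule finite_subset[of _ "Pow {0..<n}"], auto)
  then show ?thesis using n_subsets[of "{0..<n}" k] by simp
qed

lemma exists_good:
  assumes b: "b \<ge> 1" and kn: "k \<le> n"
    and small: "real (card (Bd n b m \<rho>)) * real (n choose k) <
                real (card (Omg n b)) * (real (n choose k) / (2 * real b ^ (k choose 2)))"
  shows "\<exists>f\<in>Omg n b - Bd n b m \<rho>. real (card (kcl n k f)) \<ge> real (n choose k) / (2 * real b ^ (k choose 2))"
proof (rule ccontr)
  let ?t = "real (n choose k) / (2 * real b ^ (k choose 2))"
  let ?O = "Omg n b" and ?B = "Bd n b m \<rho>"
  let ?X = "\<lambda>f. real (card (kcl n k f))"
  assume "\<not> ?thesis"
  then have lt: "\<And>f. f \<in> ?O - ?B \<Longrightarrow> ?X f < ?t" by force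
  have BO: "?B \<subseteq> ?O" unfolding Bd_def by auto
  have fO: "finite ?O" by (rule finite_Omg)
  have KP: "k choose 2 \<le> card (prs {0..<n})"
    using kn by (simp add: card_prs binomial_right_mono)
  have "(\<Sum>f\<in>?O. ?X f) = real ((n choose k) * b ^ (card (prs {0..<n}) - (k choose 2)))"
    using sum_kcl[OF b, of n k] by (metis of_nat_sum)
  also have "\<dots> = real (n choose k) * real b ^ card (prs {0..<n}) / real b ^ (k choose 2)"
    using b KP by (simp only: of_nat_mult of_nat_power) (simp add: power_diff)
  also have "\<dots> = 2 * (real (card ?O) * ?t)"
    using b by (simp add: card_Omg)
  finally have S: "(\<Sum>f\<in>?O. ?X f) = 2 * (real (card ?O) * ?t)" .
  have split: "(\<Sum>f\<in>?O. ?X f) = (\<Sum>f\<in>?O - ?B. ?X f) + (\<Sum>f\<in>?B. ?X f)"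
    using fO BO by (metis sum.subset_diff)
  have h1: "(\<Sum>f\<in>?O - ?B. ?X f) \<le> (\<Sum>f\<in>?O - ?B. ?t)"
    by (rule sum_mono) (use lt in force)
  have t0: "?t \<ge> 0" by simp
  have h2: "real (card (?O - ?B)) * ?t \<le> real (card ?O) * ?t"
    using fO t0 by (intro mult_right_mono) (auto intro: card_mono)
  have h3: "(\<Sum>f\<in>?B. ?X f) \<le> (\<Sum>f\<in>?B. real (n choose k))"
    by (rule sum_mono) (simp add: kcl_le)
  have h1': "(\<Sum>f\<in>?O - ?B. ?X f) \<le> real (card (?O - ?B)) * ?t"
    using h1 by (simp only: sum_constant)
  have h3': "(\<Sum>f\<in>?B. ?X f) \<le> real (card ?B) * real (n choose k)"
    using h3 by (simp only: sum_constant)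
  have "(\<Sum>f\<in>?O. ?X f) < 2 * (real (card ?O) * ?t)"
    using split h1' h2 h3' small by linarith
  then show False using S by simp
qed

lemma induced_gr: "induced_edges (gr n f) S = card {e \<in> prs {0..<n}. f e = 0 \<and> e \<subseteq> S}"
  unfolding induced_edges_def gr_def by (simp add: conj_assoc)

lemma agg_bound:
  assumes f: "f \<in> Omg n b - Bd n b m \<rho>0" and m: "m \<ge> 2" and \<rho>: "\<rho> \<ge> \<rho>0"
    and agg: "dense_aggregator \<rho> (gr n f) Ss"
  shows "card (kcl n k f) \<le> length Ss * (m choose k)"
proof -
  have small: "card S < m" if S: "S \<in> set Ss" for S
  proof (rule ccontr)
    assume "\<not> card S < m"
    then have ms: "m \<le> card S" by simp
    have SV: "S \<subseteq> {0..<n}" and dS: "density (gr n f) S \<ge> \<rho>"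
      using agg S unfolding dense_aggregator_def gr_def by auto
    have c2: "card S \<ge> 2" using ms m by simp
    have pos: "real (card S choose 2) > 0" using c2 by simp
    have "\<rho>0 \<le> real (induced_edges (gr n f) S) / real (card S choose 2)"
      using dS \<rho> c2 unfolding density_def by simp
    then have "\<rho>0 * real (card S choose 2) \<le> real (induced_edges (gr n f) S)"
      using pos by (simp add: pos_le_divide_eq)
    then have "f \<in> Bd n b m \<rho>0"
      using f SV ms unfolding Bd_def induced_gr by blast
    then show False using f by blast
  qed
  have cov: "kcl n k f \<subseteq> (\<Union>S\<in>set Ss. {K. K \<subseteq> S \<and> card K = k})"
  proof
    fix K assume K: "K \<in> kcl n k f"
    have "is_clique (gr n f) K"
      unfolding is_clique_def
    proof (intro conjI ballI impI)
      show "K \<subseteq> fst (gr n f)" using K unfolding kcl_def gr_def by auto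
      fix u v assume uv: "u \<in> K" "v \<in> K" "u \<noteq> v"
      have "{u, v} \<in> prs K" using uv unfolding prs_def by auto
      then have "f {u, v} = 0" using K unfolding kcl_def by auto
      moreover have "{u, v} \<in> prs {0..<n}" using uv K unfolding prs_def kcl_def by auto
      ultimately show "{u, v} \<in> snd (gr n f)" unfolding gr_def by auto
    qed
    then obtain S where "S \<in> set Ss" "K \<subseteq> S" using agg unfolding dense_aggregator_def by blast
    then show "K \<in> (\<Union>S\<in>set Ss. {K. K \<subseteq> S \<and> card K = k})" using K unfolding kcl_def by auto
  qed
  have finS: "finite S" if "S \<in> set Ss" for S
    using agg that unfolding dense_aggregator_def gr_def by (auto intro: finite_subset)
  have "card (kcl n k f) \<le> card (\<Union>S\<in>set Ss. {K. K \<subseteq> S \<and> card K = k})"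
  proof (rule card_mono[OF _ cov])
    show "finite (\<Union>S\<in>set Ss. {K. K \<subseteq> S \<and> card K = k})"
    proof (rule finite_UN_I)
      fix S assume S: "S \<in> set Ss"
      have "finite (Pow S)" using finS[OF S] by simp
      then show "finite {K. K \<subseteq> S \<and> card K = k}"
        by (rule finite_subset[rotated]) auto
    qed simp
  qed
  also have "\<dots> \<le> (\<Sum>S\<in>set Ss. card {K. K \<subseteq> S \<and> card K = k})" by (rule card_UN_le) simp
  also have "\<dots> \<le> (\<Sum>S\<in>set Ss. m choose k)"
  proof (rule sum_mono)
    fix S assume S: "S \<in> set Ss"
    have "card {K. K \<subseteq> S \<and> card K = k} = card S choose k" using n_subsets finS S by blast
    also have "\<dots> \<le> m choose k" using small[OF S] by (intro binomial_right_mono) simp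
    finally show "card {K. K \<subseteq> S \<and> card K = k} \<le> m choose k" .
  qed
  also have "\<dots> = card (set Ss) * (m choose k)" by simp
  also have "\<dots> \<le> length Ss * (m choose k)" by (simp add: card_length)
  finally show ?thesis .
qed



lemma pow_le_exp_fact:
  fixes x :: real assumes "x \<ge> 0"
  shows "x ^ r / fact r \<le> exp x"
proof -
  have "(\<lambda>n. x ^ n /\<^sub>R fact n) sums exp x" by (rule exp_converges)
  then have sm: "summable (\<lambda>n. x ^ n /\<^sub>R fact n)" and e: "exp x = (\<Sum>n. x ^ n /\<^sub>R fact n)"
    by (auto simp: sums_iff)
  have "(\<Sum>n\<in>{r}. x ^ n /\<^sub>R fact n) \<le> (\<Sum>n. x ^ n /\<^sub>R fact n)"
    by (rule sum_le_suminf[OF sm]) (use assms in auto)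
  then show ?thesis using e by (simp add: divide_inverse mult.commute)
qed

lemma pow_fact: "real r ^ r \<le> 4 ^ r * fact r"
proof -
  have "real r ^ r / fact r \<le> exp (real r)" by (rule pow_le_exp_fact) simp
  also have "exp (real r) = exp 1 ^ r" using exp_of_nat_mult[of r 1] by simp
  also have "\<dots> \<le> 4 ^ r" by (rule power_mono) (use exp_le in auto)
  finally show ?thesis by (simp add: divide_le_eq mult.commute)
qed

lemma choose2_real: "real (s choose 2) * 2 = real s * (real s - 1)"
proof (cases s)
  case 0 then show ?thesis by simp
next
  case (Suc t)
  have "even (s * (s - 1))" by (cases "even s") auto
  then have "(s choose 2) * 2 = s * (s - 1)" by (simp add: choose_two)
  then have "real ((s choose 2) * 2) = real (s * (s - 1))" by simp
  then show ?thesis using Suc by (simp add: of_nat_diff algebra_simps)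
qed

lemma binom_ratio:
  fixes a :: real assumes a: "a > 0" and M: "real M \<le> a * real r / 8"
  shows "real (M choose r) * 2 ^ r \<le> a ^ r"
proof -
  have "real (M choose r) * fact r \<le> real M ^ r"
    using binomial_fact_pow[of M r] by (metis of_nat_fact of_nat_le_iff of_nat_mult of_nat_power)
  also have "\<dots> \<le> (a * real r / 8) ^ r" by (rule power_mono[OF M]) simp
  also have "\<dots> = a ^ r * real r ^ r / 8 ^ r" by (simp add: power_mult_distrib power_divide)
  also have "\<dots> \<le> a ^ r * (4 ^ r * fact r) / 8 ^ r"
    using a by (intro divide_right_mono mult_left_mono pow_fact) auto
  finally have "real (M choose r) * fact r \<le> (a ^ r * 4 ^ r / 8 ^ r) * fact r" by simp
  then have "real (M choose r) \<le> a ^ r * 4 ^ r / 8 ^ r"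
    by (rule mult_right_le_imp_le) simp
  also have "\<dots> = a ^ r / 2 ^ r"
  proof -
    have "(8::real) ^ r = 4 ^ r * 2 ^ r" by (simp add: power_mult_distrib[symmetric])
    then show ?thesis by simp
  qed
  finally show ?thesis by (simp add: le_divide_eq)
qed


lemma term_bound:
  assumes a: "a \<ge> 2" and s: "a ^ 2 \<le> s" "s \<le> 2 ^ a"
  shows "real ((2 ^ a) choose s) * real ((s choose 2) choose nat \<lceil>8 / real a * real (s choose 2)\<rceil>)
          * real (a ^ (card (prs {0..<2 ^ a}) - nat \<lceil>8 / real a * real (s choose 2)\<rceil>))
        \<le> real a ^ card (prs {0..<2 ^ a}) / 2 ^ (a * a ^ 2)"
proof -
  define n :: nat where "n = 2 ^ a"
  define M where "M = s choose 2"
  define r where "r = nat \<lceil>8 / real a * real M\<rceil>"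
  define P where "P = card (prs {0..<n})"
  have a0: "real a > 0" using a by simp
  have hr: "real r \<ge> 8 / real a * real M" unfolding r_def by linarith
  then have hr2: "real r * real a \<ge> 8 * real M" using a0 by (simp add: field_simps)
  have M2: "real M * 2 = real s * (real s - 1)" unfolding M_def by (rule choose2_real)
  have hM: "real M \<le> real a * real r / 8" using hr2 by (simp add: field_simps)
  have br: "real (M choose r) * 2 ^ r \<le> real a ^ r" by (rule binom_ratio[OF a0 hM])
  have t1: "real (M choose r) * real (a ^ (P - r)) \<le> real a ^ P / 2 ^ r"
  proof (cases "r \<le> P")
    case True
    have e1: "real (a ^ (P - r)) = real a ^ P / real a ^ r" using True a0 by (simp only: of_nat_power) (simp add: power_diff)
    have e2: "real (M choose r) \<le> real a ^ r / 2 ^ r" using br by (simp add: le_divide_eq)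
    have "real (M choose r) * real (a ^ (P - r)) = real (M choose r) * (real a ^ P / real a ^ r)"
      by (simp only: e1)
    also have "\<dots> \<le> real a ^ r / 2 ^ r * (real a ^ P / real a ^ r)"
      by (rule mult_right_mono[OF e2]) simp
    also have "\<dots> = real a ^ P / 2 ^ r" using a0 by simp
    finally show ?thesis .
  next
    case False
    have "M \<le> n choose 2" unfolding M_def using s n_def by (simp add: binomial_right_mono)
    also have "\<dots> = P" unfolding P_def by (simp add: card_prs)
    finally have "M < r" using False by simp
    then show ?thesis by (simp add: binomial_eq_0)
  qed
  have "real (a ^ 2) \<le> real s" using s(1) by (simp only: of_nat_le_iff)
  then have sa: "real s \<ge> real a ^ 2" by simp
  have "(2::real) ^ 2 \<le> real a ^ 2" using a by (intro power_mono) auto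
  then have a2: "real a ^ 2 \<ge> 2" by simp
  have "2 * (real s - 1) \<ge> real a ^ 2" using sa a2 by argo
  then have "2 * real s * (2 * (real s - 1)) \<ge> 2 * real s * real a ^ 2"
    by (intro mult_left_mono) auto
  then have "real r * real a \<ge> 2 * real a * real s * real a"
    using hr2 M2 by (simp add: power2_eq_square algebra_simps)
  then have "real r \<ge> 2 * real a * real s" using a0 by (simp add: algebra_simps)
  then have "real (2 * a * s) \<le> real r" by simp
  then have r2: "2 * a * s \<le> r" by (simp only: of_nat_le_iff)
  have bn: "real (n choose s) \<le> 2 ^ (a * s)"
  proof -
    have "n choose s \<le> n ^ s" using s n_def by (intro binomial_le_pow) simp
    then have "real (n choose s) \<le> real (n ^ s)" by (simp only: of_nat_le_iff)
    then show ?thesis unfolding n_def by (simp add: power_mult)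
  qed
  have "real (n choose s) * real (M choose r) * real (a ^ (P - r)) \<le> 2 ^ (a * s) * (real a ^ P / 2 ^ r)"
    using bn t1 by (simp only: mult.assoc) (rule mult_mono, auto)
  also have "\<dots> \<le> 2 ^ (a * s) * (real a ^ P / 2 ^ (2 * a * s))"
    using r2 by (intro mult_left_mono divide_left_mono power_increasing) auto
  also have "\<dots> = real a ^ P / 2 ^ (a * s)"
  proof -
    have "(2::real) ^ (2 * a * s) = 2 ^ (a * s) * 2 ^ (a * s)"
      by (simp add: power_add[symmetric] mult_2 add_mult_distrib)
    then show ?thesis by simp
  qed
  also have "\<dots> \<le> real a ^ P / 2 ^ (a * a ^ 2)"
    using s by (intro divide_left_mono power_increasing) auto
  finally show ?thesis unfolding n_def M_def r_def P_def .
qed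


lemma bad_small:
  assumes a: "a \<ge> 2"
  shows "real (card (Bd (2 ^ a) a (a ^ 2) (8 / real a)))
        \<le> real a ^ card (prs {0..<2 ^ a}) * (2 ^ a + 1) / 2 ^ (a * a ^ 2)"
proof -
  let ?n = "2 ^ a :: nat" and ?m = "a ^ 2"
  let ?r = "\<lambda>s. nat \<lceil>8 / real a * real (s choose 2)\<rceil>"
  let ?P = "card (prs {0..<2 ^ a})"
  let ?B = "real a ^ ?P / 2 ^ (a * a ^ 2)"
  have "card (Bd ?n a ?m (8 / real a)) \<le> (\<Sum>s\<in>{?m..?n}. (?n choose s) * ((s choose 2) choose ?r s) * a ^ (?P - ?r s))"
    using card_Bd[of a ?n ?m "8 / real a"] a by simp
  then have "real (card (Bd ?n a ?m (8 / real a))) \<le> real (\<Sum>s\<in>{?m..?n}. (?n choose s) * ((s choose 2) choose ?r s) * a ^ (?P - ?r s))"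
    by (simp only: of_nat_le_iff)
  also have "\<dots> = (\<Sum>s\<in>{?m..?n}. real (?n choose s) * real ((s choose 2) choose ?r s) * real (a ^ (?P - ?r s)))"
    by (simp only: of_nat_sum of_nat_mult)
  also have "\<dots> \<le> (\<Sum>s\<in>{?m..?n}. ?B)"
    by (rule sum_mono) (rule term_bound[OF a], auto)
  also have "\<dots> = real (card {?m..?n}) * ?B" by simp
  also have "\<dots> \<le> (2 ^ a + 1) * ?B"
  proof (rule mult_right_mono)
    have "card {?m..?n} \<le> 2 ^ a + 1" by simp
    then have "real (card {?m..?n}) \<le> real (2 ^ a + 1 :: nat)" by (simp only: of_nat_le_iff)
    then show "real (card {?m..?n}) \<le> 2 ^ a + 1" by simp
  qed simp
  finally show ?thesis by (simp add: mult.commute[of "2 ^ a + 1"])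
qed

lemma lin_aux: "32 * Y \<le> X \<Longrightarrow> 2 * k \<le> Y \<Longrightarrow> 8 * Z \<le> 4 * X \<Longrightarrow> 32 \<le> k \<Longrightarrow>
  3 * X + 8 * (1 + Z + 2 * Y + 2 * k) \<le> 8 * (X::nat)"
proof -
  assume h: "32 * Y \<le> X" "2 * k \<le> Y" "8 * Z \<le> 4 * X" "32 \<le> k"
  have "8 + 16 * Y + 16 * k \<le> X" using h(1,2,4) by linarith
  then show ?thesis using h(3) unfolding distrib_left by linarith
qed

lemma final_num:
  fixes j k a :: nat
  assumes j: "j \<ge> 2" and k: "k \<ge> 32" and ajk: "a = j * k" and aj: "a = 2 ^ j"
  shows "2 powr (3 * real j * real k ^ 2 / 8) * (2 * real a ^ (k choose 2) * real ((a ^ 2) choose k))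
         \<le> real ((2 ^ a) choose k)"
proof -
  let ?X = "3 * real j * real k ^ 2 / 8"
  define D where "D = 1 + j * (k choose 2) + 2 * (j * k) + 2 * k"
  have K2: "(k choose 2) * 2 = k * (k - 1)"
  proof -
    have "real ((k choose 2) * 2) = real (k * (k - 1))"
      using choose2_real[of k] k by (simp add: of_nat_diff)
    then show ?thesis by (simp only: of_nat_eq_iff)
  qed
  have kk: "j * k * k \<ge> 32 * (j * k)" using k by simp
  have jk: "j * k \<ge> 2 * k" using j by simp
  have "8 * (j * (k choose 2)) = 4 * (j * ((k choose 2) * 2))" by simp
  also have "\<dots> = 4 * (j * (k * (k - 1)))" by (simp only: K2)
  also have "\<dots> \<le> 4 * (j * (k * k))" by simp
  finally have h8: "8 * (j * (k choose 2)) \<le> 4 * (j * k * k)" by (simp add: mult.assoc)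
  have nat_ineq: "3 * (j * k * k) + 8 * D \<le> 8 * (a * k)"
    unfolding D_def ajk by (rule lin_aux[OF kk jk h8 k])
  have "real (3 * (j * k * k) + 8 * D) \<le> real (8 * (a * k))" using nat_ineq by (simp only: of_nat_le_iff)
  then have X: "?X + real D \<le> real (a * k)" by (simp add: power2_eq_square algebra_simps)
  have a0: "a > 0" using aj by simp
  have "2 powr ?X * 2 ^ D = 2 powr (?X + real D)" by (simp add: powr_add powr_realpow)
  also have "\<dots> \<le> 2 powr real (a * k)" using X by simp
  also have "\<dots> = 2 ^ (a * k)" by (rule powr_realpow) simp
  finally have main: "2 powr ?X * 2 ^ D \<le> 2 ^ (a * k)" .
  have pa: "real a ^ (k choose 2) = 2 ^ (j * (k choose 2))" using aj by (simp add: power_mult)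
  have pm: "real (a ^ 2) ^ k = 2 ^ (2 * (j * k))" using aj by (simp add: power_mult[symmetric] mult.commute mult.left_commute)
  have pn: "real (2 ^ a :: nat) ^ k = 2 ^ (a * k)" by (simp add: power_mult)
  have p4: "(4::real) ^ k = 2 ^ (2 * k)" by (simp add: power_mult)
  have "2 ^ D = 2 * real a ^ (k choose 2) * real (a ^ 2) ^ k * 4 ^ k"
    unfolding D_def pa pm p4 by (simp add: power_add mult_ac)
  then have main2: "2 powr ?X * (2 * real a ^ (k choose 2) * real (a ^ 2) ^ k) * 4 ^ k \<le> real (2 ^ a :: nat) ^ k"
    using main pn by (simp add: mult_ac)
  have ka: "k \<le> 2 ^ a"
  proof -
    have "k \<le> a" using ajk j by simp
    also have "a < 2 ^ a" by (rule less_exp)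
    finally show ?thesis by simp
  qed
  have kf: "real k ^ k \<le> 4 ^ k * fact k" by (rule pow_fact)
  have bm: "real ((a ^ 2) choose k) * fact k \<le> real (a ^ 2) ^ k"
  proof -
    have "((a ^ 2) choose k) * fact k \<le> (a ^ 2) ^ k" by (rule binomial_fact_pow)
    then have "real (((a ^ 2) choose k) * fact k) \<le> real ((a ^ 2) ^ k)" by (simp only: of_nat_le_iff)
    then show ?thesis by simp
  qed
  have bn: "(real (2 ^ a :: nat) / real k) ^ k \<le> real ((2 ^ a) choose k)"
    by (rule binomial_ge_n_over_k_pow_k[OF ka])
  define C where "C = 2 powr ?X * (2 * real a ^ (k choose 2))"
  have C0: "C \<ge> 0" unfolding C_def by simp
  have kpos: "real k > 0" using k by simp
  have "C * real ((a ^ 2) choose k) * fact k * 4 ^ k \<le> C * real (a ^ 2) ^ k * 4 ^ k"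
    using bm C0 by (simp add: mult.assoc mult_left_mono)
  also have "\<dots> \<le> real (2 ^ a :: nat) ^ k" using main2 unfolding C_def by (simp add: mult_ac)
  finally have s1: "C * real ((a ^ 2) choose k) * (fact k * 4 ^ k) \<le> real (2 ^ a :: nat) ^ k" by (simp add: mult_ac)
  have "C * real ((a ^ 2) choose k) * real k ^ k \<le> C * real ((a ^ 2) choose k) * (4 ^ k * fact k)"
    using kf C0 by (intro mult_left_mono) auto
  also have "\<dots> \<le> real (2 ^ a :: nat) ^ k" using s1 by (simp add: mult_ac)
  finally have "C * real ((a ^ 2) choose k) \<le> real (2 ^ a :: nat) ^ k / real k ^ k"
    using kpos by (simp add: le_divide_eq)
  also have "\<dots> = (real (2 ^ a :: nat) / real k) ^ k" by (simp add: power_divide)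
  also have "\<dots> \<le> real ((2 ^ a) choose k)" by (rule bn)
  finally show ?thesis unfolding C_def by (simp add: mult_ac)
qed



lemma instance_ex:
  fixes j k a :: nat
  assumes j: "j \<ge> 2" and k: "k \<ge> 32" and ajk: "a = j * k" and aj: "a = 2 ^ j"
  shows "\<exists>G. simple_graph G \<and> card (fst G) = 2 ^ a \<and>
    (\<forall>\<rho>::real. \<forall>Ss. let n = card (fst G) in
       \<rho> \<ge> 8 / log 2 (real n) \<longrightarrow> dense_aggregator \<rho> G Ss \<longrightarrow>
       real (length Ss) \<ge>
         real n powr (3 * log 2 (real n) / (8 * log 2 (log 2 (real n)))) / 1)"
proof -
  define n :: nat where "n = 2 ^ a"
  define K2 where "K2 = k choose 2"
  define P where "P = card (prs {0..<n})"
  define B where "B = real (n choose k)"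
  have a4: "a \<ge> 4"
  proof -
    have "(2::nat) ^ 2 \<le> 2 ^ j" using j by (intro power_increasing) auto
    then show ?thesis using aj by simp
  qed
  have ka: "k \<le> a" using ajk j by simp
  have kn: "k \<le> n"
  proof -
    have "a < 2 ^ a" by (rule less_exp)
    then show ?thesis using ka unfolding n_def by linarith
  qed
  have aa: "a \<le> a ^ 2" using a4 by (simp add: power2_eq_square)
  have km: "k \<le> a ^ 2" using ka aa by linarith
  have m2: "a ^ 2 \<ge> 2" using a4 aa by linarith
  have Bpos: "B > 0" unfolding B_def using kn by simp
  have K2le: "K2 \<le> k * k"
  proof -
    have "real (K2 * 2) = real (k * (k - 1))" unfolding K2_def
      using choose2_real[of k] k by (simp add: of_nat_diff)
    then have "K2 * 2 = k * (k - 1)" by (simp only: of_nat_eq_iff)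
    moreover have "k * (k - 1) \<le> k * k" by simp
    ultimately show ?thesis by linarith
  qed
  have jK: "j * K2 \<le> a * a"
  proof -
    have "j * K2 \<le> j * (k * k)" using K2le by simp
    also have "\<dots> = a * k" using ajk by simp
    also have "\<dots> \<le> a * a" using ka by simp
    finally show ?thesis .
  qed
  have cube: "a * a + a + 2 < a * a ^ 2"
  proof -
    have "4 * (a * a) \<le> a * (a * a)" using a4 by simp
    moreover have "4 * a \<le> a * a" using a4 by simp
    ultimately show ?thesis unfolding power2_eq_square using a4 by linarith
  qed
  have aK: "real a ^ K2 = 2 ^ (j * K2)" using aj by (simp add: power_mult)
  have ineq: "2 * real a ^ K2 * (2 ^ a + 1) < 2 ^ (a * a ^ 2)"
  proof -
    have "2 * real a ^ K2 * (2 ^ a + 1) \<le> 2 * 2 ^ (a * a) * (2 * 2 ^ a)"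
    proof (intro mult_mono)
      show "real a ^ K2 \<le> 2 ^ (a * a)" unfolding aK using jK by (intro power_increasing) auto
      have "(1::real) \<le> 2 ^ a" by simp
      then show "2 ^ a + 1 \<le> 2 * (2::real) ^ a" by simp
    qed auto
    also have "\<dots> = 2 ^ (a * a + a + 2)" by (simp add: power_add)
    also have "\<dots> < 2 ^ (a * a ^ 2)" using cube by (intro power_strict_increasing) auto
    finally show ?thesis .
  qed
  have bs: "real (card (Bd n a (a ^ 2) (8 / real a))) \<le> real a ^ P * (2 ^ a + 1) / 2 ^ (a * a ^ 2)"
    unfolding n_def P_def using bad_small a4 by simp
  have cO: "real (card (Omg n a)) = real a ^ P" unfolding P_def by (simp add: card_Omg)
  have aP: "real a ^ P > 0" using a4 by simp
  have small: "real (card (Bd n a (a ^ 2) (8 / real a))) * B < real (card (Omg n a)) * (B / (2 * real a ^ K2))"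
  proof -
    have "real (card (Bd n a (a ^ 2) (8 / real a))) * B \<le> real a ^ P * (2 ^ a + 1) / 2 ^ (a * a ^ 2) * B"
      using bs Bpos by (intro mult_right_mono) auto
    also have "\<dots> < real a ^ P * (B / (2 * real a ^ K2))"
    proof -
      have aK0: "real a ^ K2 > 0" using a4 by simp
      have "(2 ^ a + 1) / 2 ^ (a * a ^ 2) < 1 / (2 * real a ^ K2)"
        using ineq aK0 by (simp add: field_simps)
      then have "(2 ^ a + 1) / 2 ^ (a * a ^ 2) * (real a ^ P * B) < 1 / (2 * real a ^ K2) * (real a ^ P * B)"
        using aP Bpos by (intro mult_strict_right_mono) auto
      then show ?thesis by (simp add: field_simps)
    qed
    finally show ?thesis using cO by simp
  qed
  obtain f where f: "f \<in> Omg n a - Bd n a (a ^ 2) (8 / real a)"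
    and Xf: "real (card (kcl n k f)) \<ge> B / (2 * real a ^ K2)"
    using exists_good[of a k n "a ^ 2" "8 / real a"] a4 kn small unfolding B_def K2_def by auto
  define G where "G = gr n f"
  have sg: "simple_graph G" unfolding G_def gr_def simple_graph_def prs_def by auto
  have cG: "card (fst G) = n" unfolding G_def gr_def by simp
  have L1: "log 2 (real n) = real a" unfolding n_def by (simp add: log_nat_power)
  have L2: "log 2 (real a) = real j" using aj by (simp add: log_nat_power)
  have fin: "2 powr (3 * real j * real k ^ 2 / 8) * (2 * real a ^ K2 * real ((a ^ 2) choose k)) \<le> B"
    unfolding B_def K2_def n_def by (rule final_num[OF j k ajk aj])
  have target: "real n powr (3 * log 2 (real n) / (8 * log 2 (log 2 (real n)))) = 2 powr (3 * real j * real k ^ 2 / 8)"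
  proof -
    have "real n = 2 powr real a" unfolding n_def by (simp add: powr_realpow)
    then have "real n powr (3 * log 2 (real n) / (8 * log 2 (log 2 (real n)))) = 2 powr (real a * (3 * real a / (8 * real j)))"
      using L1 L2 by (simp add: powr_powr)
    also have "real a * (3 * real a / (8 * real j)) = 3 * real j * real k ^ 2 / 8"
      using ajk j by (simp add: field_simps power2_eq_square)
    finally show ?thesis .
  qed
  have main: "\<forall>\<rho>::real. \<forall>Ss. let n = card (fst G) in
       \<rho> \<ge> 8 / log 2 (real n) \<longrightarrow> dense_aggregator \<rho> G Ss \<longrightarrow>
       real (length Ss) \<ge>
         real n powr (3 * log 2 (real n) / (8 * log 2 (log 2 (real n)))) / 1"
  proof (intro allI)
    fix \<rho> :: real and Ss
    show "let n = card (fst G) in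
       \<rho> \<ge> 8 / log 2 (real n) \<longrightarrow> dense_aggregator \<rho> G Ss \<longrightarrow>
       real (length Ss) \<ge>
         real n powr (3 * log 2 (real n) / (8 * log 2 (log 2 (real n)))) / 1"
      unfolding Let_def cG
    proof (intro impI)
      assume r: "8 / log 2 (real n) \<le> \<rho>" and agg: "dense_aggregator \<rho> G Ss"
      have r': "8 / real a \<le> \<rho>" using r L1 by simp
      have "card (kcl n k f) \<le> length Ss * (a ^ 2 choose k)"
        using agg_bound[OF f m2 r'] agg unfolding G_def by simp
      then have "real (card (kcl n k f)) \<le> real (length Ss * (a ^ 2 choose k))"
        by (simp only: of_nat_le_iff)
      then have X: "real (card (kcl n k f)) \<le> real (length Ss) * real (a ^ 2 choose k)"
        by simp
      have Cpos: "real ((a ^ 2) choose k) > 0" using km by simp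
      have "2 powr (3 * real j * real k ^ 2 / 8) * (2 * real a ^ K2 * real ((a ^ 2) choose k))
            \<le> 2 * real a ^ K2 * (real (length Ss) * real (a ^ 2 choose k))"
      proof -
        have "B \<le> 2 * real a ^ K2 * real (card (kcl n k f))"
          using Xf a4 by (simp add: field_simps)
        also have "\<dots> \<le> 2 * real a ^ K2 * (real (length Ss) * real (a ^ 2 choose k))"
          using X by (intro mult_left_mono) auto
        finally show ?thesis using fin by linarith
      qed
      then have "2 powr (3 * real j * real k ^ 2 / 8) * real ((a ^ 2) choose k) \<le> real (length Ss) * real (a ^ 2 choose k)"
        using a4 by (simp add: mult_ac)
      then have "2 powr (3 * real j * real k ^ 2 / 8) \<le> real (length Ss)"
        using Cpos by simp
      then show "real n powr (3 * log 2 (real n) / (8 * log 2 (log 2 (real n)))) / 1 \<le> real (length Ss)"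
        using target by simp
    qed
  qed
  show ?thesis using sg cG main n_def by blast
qed



lemma pow_ge: "i \<ge> 3 \<Longrightarrow> i + 5 \<le> (2::nat) ^ i"
proof (induction i rule: nat_induct_at_least)
  case base then show ?case by simp
next
  case (Suc i) then show ?case by simp
qed

lemma inst_i:
  assumes i: "i \<ge> 3"
  shows "\<exists>G. simple_graph G \<and> card (fst G) = 2 ^ 2 ^ 2 ^ i \<and>
    (\<forall>\<rho>::real. \<forall>Ss. let n = card (fst G) in
       \<rho> \<ge> 8 / log 2 (real n) \<longrightarrow> dense_aggregator \<rho> G Ss \<longrightarrow>
       real (length Ss) \<ge>
         real n powr (3 * log 2 (real n) / (8 * log 2 (log 2 (real n)))) / 1)"
proof -
  define j :: nat where "j = 2 ^ i"
  define k :: nat where "k = 2 ^ (j - i)"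
  have ij: "i + 5 \<le> j" unfolding j_def using pow_ge[OF i] .
  have j2: "j \<ge> 2" using ij by simp
  have k32: "k \<ge> 32"
  proof -
    have "(2::nat) ^ 5 \<le> 2 ^ (j - i)" using ij by (intro power_increasing) auto
    then show ?thesis unfolding k_def by simp
  qed
  have ajk: "(2::nat) ^ j = j * k"
  proof -
    have "j * k = 2 ^ i * 2 ^ (j - i)" using j_def k_def by simp
    also have "\<dots> = 2 ^ (i + (j - i))" by (simp add: power_add)
    also have "i + (j - i) = j" using ij by simp
    finally show ?thesis by simp
  qed
  show ?thesis using instance_ex[of j k "2 ^ j", OF j2 k32 ajk refl] unfolding j_def by simp
qed

theorem theorem4p1:
  shows "\<exists>(c::real) > 0. \<exists>\<G> :: graph set. \<exists>s :: nat \<Rightarrow> real.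
    (\<forall>G\<in>\<G>. simple_graph G) \<and>
    infinite {n. \<exists>G\<in>\<G>. card (fst G) = n} \<and>
    (\<forall>n. s n > 0) \<and> ((\<lambda>n. s n / real n) \<longlonglongrightarrow> 0) \<and>
    (\<forall>G\<in>\<G>. \<forall>\<rho>::real. \<forall>Ss. let n = card (fst G) in
       \<rho> \<ge> c / log 2 (real n) \<longrightarrow> dense_aggregator \<rho> G Ss \<longrightarrow>
       real (length Ss) \<ge>
         real n powr (3 * log 2 (real n) / (8 * log 2 (log 2 (real n)))) / s n)"
proof -
  define Gs where "Gs = {G. simple_graph G \<and> (\<exists>i\<ge>3. card (fst G) = 2 ^ 2 ^ 2 ^ i) \<and>
    (\<forall>\<rho>::real. \<forall>Ss. let n = card (fst G) in
       \<rho> \<ge> 8 / log 2 (real n) \<longrightarrow> dense_aggregator \<rho> G Ss \<longrightarrow>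
       real (length Ss) \<ge>
         real n powr (3 * log 2 (real n) / (8 * log 2 (log 2 (real n)))) / 1)}"
  have inst: "\<exists>G\<in>Gs. card (fst G) = 2 ^ 2 ^ 2 ^ i" if "i \<ge> 3" for i
    using inst_i[OF that] that unfolding Gs_def by blast
  have inf: "infinite {n. \<exists>G\<in>Gs. card (fst G) = n}"
    unfolding infinite_nat_iff_unbounded_le
  proof
    fix m :: nat
    have "m < m + 3" by simp
    also have "\<dots> < 2 ^ (m + 3)" by (rule less_exp)
    also have "\<dots> < 2 ^ 2 ^ (m + 3)" by (rule less_exp)
    also have "\<dots> < 2 ^ 2 ^ 2 ^ (m + 3)" by (rule less_exp)
    finally have "m \<le> 2 ^ 2 ^ 2 ^ (m + 3)" by simp
    moreover have "2 ^ 2 ^ 2 ^ (m + 3) \<in> {n. \<exists>G\<in>Gs. card (fst G) = n}"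
      using inst[of "m + 3"] by simp
    ultimately show "\<exists>n\<ge>m. n \<in> {n. \<exists>G\<in>Gs. card (fst G) = n}" by blast
  qed
  have lim: "(\<lambda>n. 1 / real n) \<longlonglongrightarrow> 0" by (rule lim_1_over_n)
  show ?thesis
    apply (rule exI[of _ 8])
    apply (intro conjI)
     apply simp
    apply (rule exI[of _ Gs])
    apply (rule exI[of _ "\<lambda>_. 1"])
    using inf lim unfolding Gs_def by auto
qed

end
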